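(* Let $n\ge2$, $0<\alpha\le1/\sqrt2$, $\nu=\pi/4$, $x_i = -1+\frac{2i}{n-1}$ ($i=0,\dots,n-1$), and define $\bar{\mathbf{X}}\in\mathbb{R}^{n\times n}$ by $\bar{\mathbf{X}}_{ij} = \mathbf{1}\{\|\mathbf{R}_\nu^\top(x_i,x_j)^\top\|_\infty\le\alpha\}$ with $\mathbf{R}_\nu = \begin{bmatrix}\cos\nu&-\sin\nu\\ \sin\nu&\cos\nu\end{bmatrix}$. Then $$\|\bar{\mathbf{X}}\|_F^2\ge n^2\alpha^2 - 5n.$$
   Context: $\|\cdot\|_F$ is the Frobenius norm. *)

theory Defs
  imports Complex_Main
begin

definition rotT :: "real \<Rightarrow> real \<times> real \<Rightarrow> real \<times> real" where
  "rotT nu v = (cos nu * fst v + sin nu * snd v, - sin nu * fst v + cos nu * snd v)"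

definition linf_norm2 :: "real \<times> real \<Rightarrow> real" where
  "linf_norm2 v = max \<bar>fst v\<bar> \<bar>snd v\<bar>"

definition frob_norm :: "nat \<Rightarrow> (nat \<Rightarrow> nat \<Rightarrow> real) \<Rightarrow> real" where
  "frob_norm n A = sqrt (\<Sum>i<n. \<Sum>j<n. (A i j)^2)"

definition grid_pt :: "nat \<Rightarrow> nat \<Rightarrow> real" where
  "grid_pt n i = -1 + 2 * real i / (real n - 1)"

definition Xbar :: "nat \<Rightarrow> real \<Rightarrow> real \<Rightarrow> nat \<Rightarrow> nat \<Rightarrow> real" where
  "Xbar n alpha nu i j =
     (if linf_norm2 (rotT nu (grid_pt n i, grid_pt n j)) \<le> alpha then 1 else 0)"

end

theory Submission
  imports Defs
begin

lemma cond:
  fixes ii jj p K :: int and alpha :: real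
  assumes p: "p = int n - 1" and n: "n \<ge> 2" and h: "0 \<le> ii" "0 \<le> jj"
    and u: "\<bar>ii+jj-p\<bar> \<le> K" and v: "\<bar>jj-ii\<bar> \<le> K"
    and K: "sqrt 2 * real_of_int K \<le> alpha * p"
  shows "Xbar n alpha (pi/4) (nat ii) (nat jj) = 1"
proof -
  have pr: "real n - 1 = real_of_int p" using p n by simp
  have pp: "real_of_int p > 0" using p n by simp
  have gi: "grid_pt n (nat ii) = -1 + 2 * ii / p" unfolding grid_pt_def pr using h by simp
  have gj: "grid_pt n (nat jj) = -1 + 2 * jj / p" unfolding grid_pt_def pr using h by simp
  have s2: "sqrt 2 * sqrt 2 = (2::real)" by simp
  have c1: "sqrt 2 / 2 * (-1 + 2 * ii / p) + sqrt 2 / 2 * (-1 + 2 * jj / p) = sqrt 2 * (ii+jj-p) / p"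
    using pp by (simp add: field_simps)
  have c2: "- (sqrt 2 / 2) * (-1 + 2 * ii / p) + sqrt 2 / 2 * (-1 + 2 * jj / p) = sqrt 2 * (jj-ii) / p"
    using pp by (simp add: field_simps)
  have b1: "\<bar>sqrt 2 * (ii+jj-p) / p\<bar> \<le> alpha"
  proof -
    have "\<bar>sqrt 2 * (ii+jj-p) / p\<bar> = sqrt 2 * \<bar>real_of_int (ii+jj-p)\<bar> / p"
      using pp by (simp add: abs_mult abs_divide)
    also have "\<dots> \<le> sqrt 2 * K / p"
      using u pp by (intro divide_right_mono mult_left_mono) (simp_all add: of_int_abs[symmetric] del: of_int_abs)
    also have "\<dots> \<le> alpha" using K pp by (simp add: divide_le_eq)
    finally show ?thesis .
  qed
  have b2: "\<bar>sqrt 2 * (jj-ii) / p\<bar> \<le> alpha"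
  proof -
    have "\<bar>sqrt 2 * (jj-ii) / p\<bar> = sqrt 2 * \<bar>real_of_int (jj-ii)\<bar> / p"
      using pp by (simp add: abs_mult abs_divide)
    also have "\<dots> \<le> sqrt 2 * K / p"
      using v pp by (intro divide_right_mono mult_left_mono) (simp_all add: of_int_abs[symmetric] del: of_int_abs)
    also have "\<dots> \<le> alpha" using K pp by (simp add: divide_le_eq)
    finally show ?thesis .
  qed
  show ?thesis unfolding Xbar_def rotT_def linf_norm2_def gi gj
    using b1 b2 c1 c2 by (simp add: cos_45 sin_45)
qed


definition gmap :: "int \<Rightarrow> int \<Rightarrow> int \<times> int \<times> int \<Rightarrow> int \<times> int" where
  "gmap p K t = (case t of (e,a,b) \<Rightarrow>
     (((e - (e+p) mod 2 + p) div 2 + a - b), ((e + (e+p) mod 2 + p) div 2 - K + a + b)))"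

lemma gmap_props:
  fixes p K e a b :: int
  assumes "e \<in> {0..1}" "0 \<le> a" "a < K" "0 \<le> b" "b < K" "2*K \<le> p"
  shows "0 \<le> fst (gmap p K (e,a,b))" "fst (gmap p K (e,a,b)) \<le> p"
    "0 \<le> snd (gmap p K (e,a,b))" "snd (gmap p K (e,a,b)) \<le> p"
    "fst (gmap p K (e,a,b)) + snd (gmap p K (e,a,b)) - p = e - K + 2*a"
    "snd (gmap p K (e,a,b)) - fst (gmap p K (e,a,b)) = (e+p) mod 2 - K + 2*b"
proof -
  define d where "d = (e+p) mod 2"
  have d: "0 \<le> d" "d \<le> 1" unfolding d_def by auto
  have q1: "2 * ((e - d + p) div 2) = e - d + p" unfolding d_def by presburger
  have q2: "2 * ((e + d + p) div 2) = e + d + p" unfolding d_def by presburger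
  have g: "gmap p K (e,a,b) = ((e - d + p) div 2 + a - b, (e + d + p) div 2 - K + a + b)"
    unfolding gmap_def d_def by simp
  show "0 \<le> fst (gmap p K (e,a,b))" "fst (gmap p K (e,a,b)) \<le> p"
    "0 \<le> snd (gmap p K (e,a,b))" "snd (gmap p K (e,a,b)) \<le> p"
    "fst (gmap p K (e,a,b)) + snd (gmap p K (e,a,b)) - p = e - K + 2*a"
    "snd (gmap p K (e,a,b)) - fst (gmap p K (e,a,b)) = (e+p) mod 2 - K + 2*b"
    using assms d q1 q2 unfolding g by (simp_all add: d_def[symmetric])
qed

lemma gmap_inj: "inj_on (gmap p K) ({0..1} \<times> UNIV \<times> UNIV)"
proof (rule inj_onI)
  fix x y assume x: "x \<in> {0..1} \<times> (UNIV::int set) \<times> (UNIV::int set)" and y: "y \<in> {0..1} \<times> (UNIV::int set) \<times> (UNIV::int set)"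
    and eq: "gmap p K x = gmap p K y"
  obtain e a b where xe: "x = (e,a,b)" by (cases x) auto
  obtain e' a' b' where ye: "y = (e',a',b')" by (cases y) auto
  define d where "d = (e+p) mod 2"
  define d' where "d' = (e'+p) mod 2"
  have q1: "2 * ((e - d + p) div 2) = e - d + p" unfolding d_def by presburger
  have q2: "2 * ((e + d + p) div 2) = e + d + p" unfolding d_def by presburger
  have q1': "2 * ((e' - d' + p) div 2) = e' - d' + p" unfolding d'_def by presburger
  have q2': "2 * ((e' + d' + p) div 2) = e' + d' + p" unfolding d'_def by presburger
  have e01: "e \<in> {0..1}" "e' \<in> {0..1}" using x y xe ye by auto
  have s: "e + 2*a = e' + 2*a'" using eq q1 q2 q1' q2' unfolding xe ye gmap_def d_def d'_def by simp
  have "0 \<le> e" "e \<le> 1" "0 \<le> e'" "e' \<le> 1" using e01 by auto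
  hence ee: "e = e'" using s by presburger
  hence "a = a'" using s by simp
  moreover have "b = b'" using eq q1 q2 q1' q2' ee unfolding xe ye gmap_def d_def d'_def by simp
  ultimately show "x = y" using xe ye ee by simp
qed


lemma lin_aux:
  fixes m nn X A B M1 M2 K2 :: real
  assumes "m \<le> (nn - 1)/2" "X = A + B" "M1 = M2 - 2*m + 1" "2 * M2 = A" "M1 \<le> K2" "B \<le> nn" "2 \<le> nn"
  shows "2 * K2 \<ge> X - 5 * nn"
  using assms by (simp add: field_simps)

lemma arith_final:
  fixes alpha m k nn :: real
  assumes n: "nn \<ge> 2" and a: "0 < alpha" "alpha^2 \<le> 1/2"
    and m: "m * sqrt 2 = alpha * (nn - 1)" and k: "k \<ge> 0" "k > m - 1"
  shows "2 * k^2 \<ge> nn^2 * alpha^2 - 5 * nn"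
proof -
  have s2: "sqrt 2 ^ 2 = (2::real)" by simp
  have m2: "2 * m^2 = alpha^2 * (nn-1)^2"
  proof -
    have "(m * sqrt 2)^2 = (alpha * (nn - 1))^2" using m by simp
    thus ?thesis by (simp add: power_mult_distrib s2)
  qed
  have mpos: "m \<ge> 0"
  proof -
    have "alpha * (nn - 1) \<ge> 0" using a n by simp
    hence "0 \<le> m * sqrt 2" using m by simp
    thus ?thesis by (simp add: zero_le_mult_iff)
  qed
  have am: "alpha^2 * (nn-1)^2 \<le> (nn-1)^2 / 2" using mult_right_mono[OF a(2), of "(nn-1)^2"] by simp
  have p0: "0 \<le> 2*nn-1" using n by simp
  have ana: "alpha^2 * (2*nn - 1) \<le> nn" using mult_right_mono[OF a(2) p0] by simp
  show ?thesis
  proof (cases "m \<ge> 1")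
    case True
    have "k \<ge> m - 1" using k by simp
    hence k2: "k^2 \<ge> (m-1)^2" using True by (intro power_mono) auto
    have "m^2 \<le> (nn-1)^2 / 4" using m2 am by linarith
    hence "(2*m)^2 \<le> (nn - 1)^2" by (simp add: power_mult_distrib)
    moreover have "0 \<le> nn - 1" using n by simp
    ultimately have "2*m \<le> nn - 1" by (rule power2_le_imp_le)
    hence "m \<le> (nn - 1)/2" by simp
    moreover have "nn^2 * alpha^2 = alpha^2 * (nn-1)^2 + alpha^2 * (2*nn - 1)" by (simp add: algebra_simps power2_eq_square)
    moreover have "(m-1)^2 = m^2 - 2*m + 1" by (simp add: power2_diff)
    ultimately show ?thesis using m2 k2 ana n
      by (rule_tac lin_aux[of m nn "nn^2 * alpha^2" "alpha^2 * (nn-1)^2" "alpha^2 * (2*nn - 1)" "(m-1)^2" "m^2" "k^2"]) simp_all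
  next
    case False
    have "m * sqrt 2 < 1 * sqrt 2" using False by (intro mult_strict_right_mono) auto
    hence "alpha * (nn - 1) < 2" using m sqrt2_less_2 by simp
    moreover have "alpha < 1"
    proof (rule ccontr)
      assume "\<not> alpha < 1"
      hence "1 \<le> alpha^2" by (simp add: one_le_power)
      thus False using a by simp
    qed
    ultimately have an: "alpha * nn < 3" by (simp add: algebra_simps)
    have "(alpha * nn)^2 < 3^2" using an a n by (intro power_strict_mono) auto
    hence "nn^2 * alpha^2 < 9" by (simp add: power_mult_distrib mult.commute)
    moreover have "0 \<le> k^2" by simp
    ultimately show ?thesis using n by linarith
  qed
qed

theorem mainTheorem7:
  fixes n :: nat and alpha :: real
  assumes "n \<ge> 2" and "0 < alpha" and "alpha \<le> 1 / sqrt 2"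
  shows "(frob_norm n (Xbar n alpha (pi / 4))) ^ 2 \<ge> real n ^ 2 * alpha ^ 2 - 5 * real n"
proof -
  define p :: int where "p = int n - 1"
  define K :: int where "K = floor (alpha * p / sqrt 2)"
  have pp: "p \<ge> 1" using assms(1) unfolding p_def by simp
  have s2pos: "sqrt 2 > 0" by simp
  have KK: "real_of_int K \<le> alpha * p / sqrt 2" unfolding K_def by simp
  hence K1: "sqrt 2 * real_of_int K \<le> alpha * p" using s2pos by (simp add: field_simps)
  have K2: "real_of_int K > alpha * p / sqrt 2 - 1" unfolding K_def by linarith
  have K0: "K \<ge> 0" unfolding K_def using assms(2) pp by simp
  have a2: "alpha^2 \<le> 1/2"
  proof -
    have "alpha^2 \<le> (1/sqrt 2)^2" using assms by (intro power_mono) auto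
    thus ?thesis by (simp add: power_divide)
  qed
  have asq: "alpha * sqrt 2 \<le> 1" using assms(3) s2pos by (simp add: field_simps)
  have "2 * real_of_int K \<le> real_of_int p"
  proof -
    have "2 * real_of_int K \<le> 2 * (alpha * p / sqrt 2)" using KK by simp
    also have "\<dots> = (alpha * sqrt 2) * p" using s2pos
      by (simp add: field_simps)
    also have "\<dots> \<le> 1 * real_of_int p" using asq pp by (intro mult_right_mono) auto
    finally show ?thesis by simp
  qed
  hence K3: "2 * K \<le> p" by linarith
  define D where "D = {0..1::int} \<times> {0..<K} \<times> {0..<K}"
  define h where "h = (\<lambda>(i::int, j::int). (nat i, nat j))"
  define S where "S = (h \<circ> gmap p K) ` D"
  have inj: "inj_on (h \<circ> gmap p K) D"
  proof (rule comp_inj_on)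
    show "inj_on (gmap p K) D" using gmap_inj[of p K] unfolding D_def
      by (rule inj_on_subset) auto
    show "inj_on h (gmap p K ` D)"
    proof (rule inj_onI)
      fix x y assume x: "x \<in> gmap p K ` D" and y: "y \<in> gmap p K ` D" and e: "h x = h y"
      have "fst x \<ge> 0 \<and> snd x \<ge> 0" using x gmap_props(1,3)[OF _ _ _ _ _ K3] unfolding D_def by auto
      moreover have "fst y \<ge> 0 \<and> snd y \<ge> 0" using y gmap_props(1,3)[OF _ _ _ _ _ K3] unfolding D_def by auto
      ultimately show "x = y" using e unfolding h_def by (cases x, cases y) auto
    qed
  qed
  have cardD: "card D = 2 * nat K * nat K" unfolding D_def by (simp add: card_cartesian_product)
  have cardS: "card S = 2 * nat K * nat K" unfolding S_def using card_image[OF inj] cardD by simp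
  have Ssub: "S \<subseteq> {..<n} \<times> {..<n}"
  proof
    fix x assume "x \<in> S"
    then obtain e a b where t: "(e,a,b) \<in> D" and xe: "x = h (gmap p K (e,a,b))" unfolding S_def by auto
    have t': "e \<in> {0..1}" "0 \<le> a" "a < K" "0 \<le> b" "b < K" using t unfolding D_def by auto
    note g = gmap_props[OF t' K3]
    show "x \<in> {..<n} \<times> {..<n}" using g pp unfolding xe h_def p_def
      by (cases "gmap p K (e,a,b)") (auto simp: p_def)
  qed
  have Sone: "Xbar n alpha (pi/4) (fst x) (snd x) = 1" if "x \<in> S" for x
  proof -
    obtain e a b where t: "(e,a,b) \<in> D" and xe: "x = h (gmap p K (e,a,b))" using \<open>x \<in> S\<close> unfolding S_def by auto
    have t': "e \<in> {0..1}" "0 \<le> a" "a < K" "0 \<le> b" "b < K" using t unfolding D_def by auto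
    note g = gmap_props[OF t' K3]
    have dd: "0 \<le> (e+p) mod 2" "(e+p) mod 2 \<le> 1" by auto
    have "Xbar n alpha (pi/4) (nat (fst (gmap p K (e,a,b)))) (nat (snd (gmap p K (e,a,b)))) = 1"
      by (rule cond[OF p_def assms(1) g(1) g(3) _ _ K1]) (use g t' dd in \<open>auto simp: abs_le_iff\<close>)
    thus ?thesis unfolding xe h_def by (cases "gmap p K (e,a,b)") simp
  qed
  have X01: "Xbar n alpha (pi/4) i j ^ 2 = Xbar n alpha (pi/4) i j" for i j
    unfolding Xbar_def by simp
  have "(\<Sum>i<n. \<Sum>j<n. (Xbar n alpha (pi/4) i j)^2) = (\<Sum>x\<in>{..<n} \<times> {..<n}. Xbar n alpha (pi/4) (fst x) (snd x))"
    by (simp add: X01 sum.cartesian_product case_prod_beta)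
  also have "\<dots> \<ge> (\<Sum>x\<in>S. Xbar n alpha (pi/4) (fst x) (snd x))"
    by (rule sum_mono2) (use Ssub in \<open>auto simp: Xbar_def\<close>)
  also have "(\<Sum>x\<in>S. Xbar n alpha (pi/4) (fst x) (snd x)) = real (card S)"
    using Sone by simp
  finally have sumge: "(\<Sum>i<n. \<Sum>j<n. (Xbar n alpha (pi/4) i j)^2) \<ge> 2 * (real_of_int K)^2"
    using cardS K0 by (simp add: power2_eq_square)
  have fr: "(frob_norm n (Xbar n alpha (pi / 4)))^2 = (\<Sum>i<n. \<Sum>j<n. (Xbar n alpha (pi/4) i j)^2)"
    unfolding frob_norm_def by (simp add: sum_nonneg)
  have m: "(alpha * p / sqrt 2) * sqrt 2 = alpha * (real n - 1)" using pp unfolding p_def by simp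
  have "2 * (real_of_int K)^2 \<ge> (real n)^2 * alpha^2 - 5 * real n"
    by (rule arith_final[OF _ assms(2) a2 m _ K2]) (use assms(1) K0 in auto)
  thus ?thesis using fr sumge by linarith
qed

end
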